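(* In the setting described in the context, for every $k\in\mathbb N$, \[ \|H^{(k)}-U\|_{L_{2,\pi}\to L_{2,\pi}}\le \beta_k:=\sup_{x\in K}\Big(\int_0^{\rho(x)}\|H_t^k-U_t\|^2_{L_{2,t}\to L_{2,t}}\,\frac{\mathrm dt}{\rho(x)}\Big)^{1/2}. \]
   Context: Let $K\subseteq\mathbb R^d$ be Borel and $\rho:K\to[0,\infty)$ measurable with $0<\int_K\rho\,\mathrm dx<\infty$; $\pi(A)=\int_A\rho\,\mathrm dx/\int_K\rho\,\mathrm dx$. For $t\ge0$, $K(t)=\{x\in K:\rho(x)\ge t\}$, assume $0<\mathrm{vol}_d(K(t))<\infty$ for $t\in(0,\|\rho\|_\infty)$, and $U_t$ is the uniform distribution on $K(t)$. For each $t$, $H_t$ is a Markov kernel on $K(t)$ (extended by $0$ outside $K(t)$, measurable in $(t,x)$), reversible with respect to $U_t$. $L_{2,\pi}=L_2(K,\pi)$, $L_{2,t}=L_2(K(t),U_t)$; $H_t$ acts on $L_{2,t}$ by $H_tf(x)=\int f(y)H_t(x,\mathrm dy)$ and $U_t$ acts by $f\mapsto U_t(f)=\int f\,\mathrm dU_t$ (a constant function). For $k\in\mathbb N$ define $H^{(k)}f(x)=\frac1{\rho(x)}\int_0^{\rho(x)}H_t^kf(x)\,\mathrm dt$ on $L_{2,\pi}$ (so $H^{(1)}=H$ is the hybrid slice sampler), and the simple slice sampler $Uf(x)=\frac1{\rho(x)}\int_0^{\rho(x)}U_t(f)\,\mathrm dt$. *)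

theory Defs
  imports "HOL-Probability.Probability"
begin

definition lvl :: "'a set \<Rightarrow> ('a \<Rightarrow> real) \<Rightarrow> real \<Rightarrow> 'a set" where
  "lvl K \<rho> t = {x\<in>K. t \<le> \<rho> x}"

definition unif :: "'a::euclidean_space set \<Rightarrow> ('a \<Rightarrow> real) \<Rightarrow> real \<Rightarrow> 'a measure" where
  "unif K \<rho> t = uniform_measure lborel (lvl K \<rho> t)"

definition normconst :: "'a::euclidean_space set \<Rightarrow> ('a \<Rightarrow> real) \<Rightarrow> real" where
  "normconst K \<rho> = enn2real (\<integral>\<^sup>+x. ennreal (indicator K x * \<rho> x) \<partial>lborel)"

definition target :: "'a::euclidean_space set \<Rightarrow> ('a \<Rightarrow> real) \<Rightarrow> 'a measure" where
  "target K \<rho> = density lborel (\<lambda>x. ennreal (indicator K x * \<rho> x / normconst K \<rho>))"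

definition ennsqrt :: "ennreal \<Rightarrow> ennreal" where
  "ennsqrt a = (if a = \<top> then \<top> else ennreal (sqrt (enn2real a)))"

definition l2norm :: "'a measure \<Rightarrow> ('a \<Rightarrow> real) \<Rightarrow> ennreal" where
  "l2norm M f = ennsqrt (\<integral>\<^sup>+x. ennreal ((f x)\<^sup>2) \<partial>M)"

definition opnorm :: "'a measure \<Rightarrow> (('a \<Rightarrow> real) \<Rightarrow> ('a \<Rightarrow> real)) \<Rightarrow> ennreal" where
  "opnorm M A = (SUP f \<in> {f \<in> borel_measurable M. l2norm M f \<le> 1}. l2norm M (A f))"

definition kop :: "('a \<Rightarrow> 'a measure) \<Rightarrow> ('a \<Rightarrow> real) \<Rightarrow> ('a \<Rightarrow> real)" where
  "kop P f = (\<lambda>x. \<integral>y. f y \<partial>(P x))"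

definition kpow :: "('a \<Rightarrow> 'a measure) \<Rightarrow> nat \<Rightarrow> ('a \<Rightarrow> real) \<Rightarrow> ('a \<Rightarrow> real)" where
  "kpow P k = (kop P ^^ k)"

definition hybk :: "'a::euclidean_space set \<Rightarrow> ('a \<Rightarrow> real) \<Rightarrow> (real \<Rightarrow> 'a \<Rightarrow> 'a measure) \<Rightarrow> nat
    \<Rightarrow> ('a \<Rightarrow> real) \<Rightarrow> ('a \<Rightarrow> real)" where
  "hybk K \<rho> H k f = (\<lambda>x. (1 / \<rho> x) * set_lebesgue_integral lborel {0..\<rho> x} (\<lambda>t. kpow (H t) k f x))"

definition simple_slice :: "'a::euclidean_space set \<Rightarrow> ('a \<Rightarrow> real) \<Rightarrow> ('a \<Rightarrow> real) \<Rightarrow> ('a \<Rightarrow> real)" where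
  "simple_slice K \<rho> f = (\<lambda>x. (1 / \<rho> x) * set_lebesgue_integral lborel {0..\<rho> x} (\<lambda>t. integral\<^sup>L (unif K \<rho> t) f))"

end

theory Submission imports Defs begin

lemma integral_measurable_subprob_algebra2:
  fixes f :: "'a \<Rightarrow> 'b \<Rightarrow> real"
  assumes f[measurable]: "(\<lambda>(x, y). f x y) \<in> borel_measurable (M \<Otimes>\<^sub>M N)"
  assumes L[measurable]: "L \<in> measurable M (subprob_algebra N)"
  shows "(\<lambda>x. integral\<^sup>L (L x) (f x)) \<in> borel_measurable M"
proof -
  have d: "(\<lambda>x. distr (L x) (M \<Otimes>\<^sub>M N) (\<lambda>y. (x, y))) \<in> measurable M (subprob_algebra (M \<Otimes>\<^sub>M N))"
    proof (rule measurable_distr2[where f="\<lambda>x y. (x,y)" and M=N])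
    show "(\<lambda>(x, y). (x, y)) \<in> M \<Otimes>\<^sub>M N \<rightarrow>\<^sub>M M \<Otimes>\<^sub>M N"
      unfolding case_prod_Pair by (rule measurable_ident)
  qed (rule L)
  have "(\<lambda>x. integral\<^sup>L (distr (L x) (M \<Otimes>\<^sub>M N) (\<lambda>y. (x, y))) (\<lambda>(x, y). f x y)) \<in> borel_measurable M"
    using measurable_compose[OF d integral_measurable_subprob_algebra[OF f]] unfolding o_def .
  then show ?thesis
  proof (rule measurable_cong[THEN iffD1, rotated])
    fix x assume x: "x \<in> space M"
    have sL: "sets (L x) = sets N" using sets_kernel[OF L x] .
    have m: "(\<lambda>y. (x, y)) \<in> measurable (L x) (M \<Otimes>\<^sub>M N)"
      unfolding measurable_cong_sets[OF sL refl] by (rule measurable_Pair1'[OF x])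
    show "integral\<^sup>L (distr (L x) (M \<Otimes>\<^sub>M N) (\<lambda>y. (x, y))) (\<lambda>(x, y). f x y) = integral\<^sup>L (L x) (f x)"
      using integral_distr[OF m f] by (simp only: case_prod_conv)
  qed
qed


lemma ennsqrt_sq: "(ennsqrt a)\<^sup>2 = a"
proof (cases "a = \<top>")
  case False
  then obtain r where r: "a = ennreal r" "0 \<le> r" by (cases a) auto
  then show ?thesis by (simp add: ennsqrt_def ennreal_power)
qed (simp add: ennsqrt_def)

lemma ennsqrt_of_sq: "ennsqrt (b\<^sup>2) = b"
proof (cases "b = \<top>")
  case False
  then obtain r where r: "b = ennreal r" "0 \<le> r" by (cases b) auto
  then show ?thesis by (simp add: ennsqrt_def ennreal_power)
qed (simp add: ennsqrt_def)

lemma ennsqrt_mono: "a \<le> b \<Longrightarrow> ennsqrt a \<le> ennsqrt b"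
proof -
  assume ab: "a \<le> b"
  show ?thesis
  proof (cases "b = \<top>")
    case True then show ?thesis by (simp add: ennsqrt_def)
  next
    case False
    then obtain r where r: "b = ennreal r" "0 \<le> r" by (cases b) auto
    with ab obtain q where q: "a = ennreal q" "0 \<le> q" "q \<le> r"
      by (cases a) (auto simp: ennreal_le_iff top_unique)
    then show ?thesis using r by (simp add: ennsqrt_def real_sqrt_le_iff)
  qed
qed

lemma ennsqrt_le_iff: "ennsqrt a \<le> b \<longleftrightarrow> a \<le> b\<^sup>2"
proof
  assume "ennsqrt a \<le> b"
  then have "(ennsqrt a)\<^sup>2 \<le> b\<^sup>2" by (rule power_mono) simp
  then show "a \<le> b\<^sup>2" by (simp add: ennsqrt_sq)
next
  assume "a \<le> b\<^sup>2"
  then have "ennsqrt a \<le> ennsqrt (b\<^sup>2)" by (rule ennsqrt_mono)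
  then show "ennsqrt a \<le> b" by (simp add: ennsqrt_of_sq)
qed

lemma kpow_homog: "kpow P n (\<lambda>y. c * f y) = (\<lambda>y. c * kpow P n f y)"
  by (induction n) (simp_all add: kpow_def kop_def)


lemma abs_le_1_sq: "\<bar>y::real\<bar> \<le> 1 + y\<^sup>2"
proof (cases "\<bar>y\<bar> \<le> 1")
  case True then show ?thesis by (simp add: add_increasing2)
next
  case False
  then have "\<bar>y\<bar> * 1 \<le> \<bar>y\<bar> * \<bar>y\<bar>" by (intro mult_left_mono) auto
  then show ?thesis by (simp add: power2_eq_square abs_mult_self_eq)
qed

lemma cs_ineq:
  fixes g :: "'b \<Rightarrow> real"
  assumes A: "A \<in> sets M" and fin: "emeasure M A < \<infinity>" and g: "g \<in> borel_measurable M"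
    and sq: "(\<integral>\<^sup>+x. indicator A x * ennreal ((g x)\<^sup>2) \<partial>M) < \<infinity>"
  shows "set_integrable M A g"
    and "ennreal ((LINT x:A|M. g x)\<^sup>2) \<le> emeasure M A * (\<integral>\<^sup>+x. indicator A x * ennreal ((g x)\<^sup>2) \<partial>M)"
proof -
  define h where "h x = indicator A x * g x" for x
  have hm: "h \<in> borel_measurable M" unfolding h_def using A g by measurable
  have eq2: "indicator A x * ennreal ((g x)\<^sup>2) = ennreal ((h x)\<^sup>2)" for x
    by (cases "x \<in> A") (simp_all add: h_def)
  have nn2: "(\<integral>\<^sup>+x. ennreal ((h x)\<^sup>2) \<partial>M) < \<infinity>"
    using sq by (simp add: eq2)
  have h2: "integrable M (\<lambda>x. (h x)\<^sup>2)"
    unfolding integrable_iff_bounded using hm nn2 by simp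
  have ind: "integrable M (indicator A :: _ \<Rightarrow> real)" using A fin by simp
  have hi: "integrable M h"
  proof (rule Bochner_Integration.integrable_bound[OF Bochner_Integration.integrable_add[OF ind h2] hm])
    show "AE x in M. norm (h x) \<le> norm (indicator A x + (h x)\<^sup>2)"
    proof (intro AE_I2)
      fix x show "norm (h x) \<le> norm (indicator A x + (h x)\<^sup>2)"
        using abs_le_1_sq[of "g x"] by (cases "x \<in> A") (simp_all add: h_def)
    qed
  qed
  then show si: "set_integrable M A g" unfolding set_integrable_def h_def by simp
  define m where "m = measure M A"
  define I where "I = integral\<^sup>L M h"
  define Q where "Q = integral\<^sup>L M (\<lambda>x. (h x)\<^sup>2)"
  have setI: "(LINT x:A|M. g x) = I" unfolding set_lebesgue_integral_def I_def h_def by simp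
  have m0: "0 \<le> m" unfolding m_def by simp
  have Q0: "0 \<le> Q" unfolding Q_def by (intro integral_nonneg_AE) simp
  have key: "I\<^sup>2 \<le> m * Q"
  proof (cases "m = 0")
    case True
    then have "emeasure M A = 0" using fin unfolding m_def
      by (simp add: emeasure_eq_ennreal_measure less_top)
    then have "AE x in M. x \<notin> A" using A by (intro AE_not_in) (simp add: null_sets_def)
    then have "AE x in M. h x = 0" by (rule AE_mp) (intro AE_I2, simp add: h_def)
    then have "I = 0" unfolding I_def by (rule integral_eq_zero_AE)
    then show ?thesis using True by simp
  next
    case False
    then have mpos: "0 < m" using m0 by simp
    have pw: "(m * h x - I * indicator A x)\<^sup>2 = m\<^sup>2 * (h x)\<^sup>2 - 2 * m * I * h x + I\<^sup>2 * indicator A x" for x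
      by (cases "x \<in> A") (simp_all add: h_def power2_eq_square algebra_simps)
    have "0 \<le> integral\<^sup>L M (\<lambda>x. (m * h x - I * indicator A x)\<^sup>2)"
      by (intro integral_nonneg_AE) simp
    also have "\<dots> = integral\<^sup>L M (\<lambda>x. m\<^sup>2 * (h x)\<^sup>2 - 2 * m * I * h x + I\<^sup>2 * indicator A x)"
      by (simp only: pw)
    also have "\<dots> = m\<^sup>2 * Q - 2 * m * I * I + I\<^sup>2 * m"
    proof -
      have i1: "integrable M (\<lambda>x. m\<^sup>2 * (h x)\<^sup>2)" using h2 by simp
      have i2: "integrable M (\<lambda>x. 2 * m * I * h x)" using hi by simp
      have i3: "integrable M (\<lambda>x. I\<^sup>2 * indicator A x)" using ind by simp
      have "integral\<^sup>L M (\<lambda>x. m\<^sup>2 * (h x)\<^sup>2 - 2 * m * I * h x + I\<^sup>2 * indicator A x)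
          = integral\<^sup>L M (\<lambda>x. m\<^sup>2 * (h x)\<^sup>2) - integral\<^sup>L M (\<lambda>x. 2 * m * I * h x) + integral\<^sup>L M (\<lambda>x. I\<^sup>2 * indicator A x)"
        using i1 i2 i3 by (simp add: Bochner_Integration.integral_add Bochner_Integration.integral_diff)
      also have "\<dots> = m\<^sup>2 * Q - 2 * m * I * I + I\<^sup>2 * m"
        using A unfolding Q_def I_def m_def by (simp add: Int_absorb2 sets.sets_into_space)
      finally show ?thesis .
    qed
    finally have "0 \<le> m * (m * Q - I\<^sup>2)" by (simp add: power2_eq_square algebra_simps)
    then have "0 \<le> m * Q - I\<^sup>2" using mpos by (simp add: zero_le_mult_iff)
    then show ?thesis by simp
  qed
  have nnQ: "(\<integral>\<^sup>+x. indicator A x * ennreal ((g x)\<^sup>2) \<partial>M) = ennreal Q"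
    unfolding eq2 Q_def by (rule nn_integral_eq_integral[OF h2]) simp
  have emA: "emeasure M A = ennreal m" using fin unfolding m_def
    by (simp add: emeasure_eq_ennreal_measure less_top)
  show "ennreal ((LINT x:A|M. g x)\<^sup>2) \<le> emeasure M A * (\<integral>\<^sup>+x. indicator A x * ennreal ((g x)\<^sup>2) \<partial>M)"
    unfolding nnQ emA setI using key m0 Q0 by (simp add: ennreal_mult[symmetric] ennreal_leI)
qed


lemma jensen_sq:
  fixes f :: "'b \<Rightarrow> real"
  assumes M: "prob_space M" and f: "f \<in> borel_measurable M"
  shows "ennreal ((integral\<^sup>L M f)\<^sup>2) \<le> (\<integral>\<^sup>+x. ennreal ((f x)\<^sup>2) \<partial>M)"
proof (cases "(\<integral>\<^sup>+x. ennreal ((f x)\<^sup>2) \<partial>M) < \<infinity>")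
  case False then show ?thesis by (simp add: top_unique less_top[symmetric])
next
  case True
  interpret prob_space M by (rule M)
  have ii: "indicator (space M) x * ennreal ((f x)\<^sup>2) = ennreal ((f x)\<^sup>2)" if "x \<in> space M" for x
    using that by simp
  have fin: "(\<integral>\<^sup>+x. indicator (space M) x * ennreal ((f x)\<^sup>2) \<partial>M) < \<infinity>"
    using True by (simp add: nn_integral_cong[OF ii])
  have "ennreal ((LINT x:space M|M. f x)\<^sup>2) \<le> emeasure M (space M) * (\<integral>\<^sup>+x. indicator (space M) x * ennreal ((f x)\<^sup>2) \<partial>M)"
    by (rule cs_ineq(2)[OF sets.top _ f fin]) (simp add: emeasure_space_1)
  moreover have "(LINT x:space M|M. f x) = integral\<^sup>L M f"
    unfolding set_lebesgue_integral_def by (intro Bochner_Integration.integral_cong) simp_all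
  ultimately show ?thesis by (simp add: nn_integral_cong[OF ii] emeasure_space_1)
qed


lemma ennreal_div_anti:
  fixes x a b :: ennreal
  assumes b: "0 < b" and ba: "b \<le> a"
  shows "x / a \<le> x / b"
proof -
  have "inverse a \<le> inverse b"
  proof (cases "a = \<top>")
    case True then show ?thesis by simp
  next
    case False
    then obtain p where p: "a = ennreal p" "0 \<le> p" by (cases a) auto
    with ba obtain q where q: "b = ennreal q" "0 \<le> q" "q \<le> p" by (cases b) (auto simp: top_unique)
    with b have q0: "0 < q" by auto
    with q have p0: "0 < p" by simp
    show ?thesis using p q q0 p0 by (simp add: inverse_ennreal ennreal_leI le_imp_inverse_le)
  qed
  then show ?thesis unfolding divide_ennreal_def by (rule mult_left_mono) simp
qed

locale sl =
  fixes K :: "'a::euclidean_space set" and \<rho> :: "'a \<Rightarrow> real"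
    and H :: "real \<Rightarrow> 'a \<Rightarrow> 'a measure"
  assumes K_borel: "K \<in> sets borel"
    and \<rho>_meas: "\<rho> \<in> borel_measurable borel"
    and \<rho>_nonneg: "\<forall>x\<in>K. 0 \<le> \<rho> x"
    and Z_pos: "0 < (\<integral>\<^sup>+x. ennreal (indicator K x * \<rho> x) \<partial>lborel)"
    and Z_fin: "(\<integral>\<^sup>+x. ennreal (indicator K x * \<rho> x) \<partial>lborel) < \<infinity>"
    and vol_lvl: "\<forall>t. 0 < t \<and> ereal t < esssup lborel (\<lambda>x. ereal (indicator K x * \<rho> x)) \<longrightarrow>
        0 < emeasure lborel (lvl K \<rho> t) \<and> emeasure lborel (lvl K \<rho> t) < \<infinity>"
    and H_meas: "(\<lambda>(t, x). H t x) \<in> borel \<Otimes>\<^sub>M borel \<rightarrow>\<^sub>M subprob_algebra borel"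
    and H_markov: "\<forall>t\<ge>0. \<forall>x\<in>lvl K \<rho> t. prob_space (H t x) \<and> emeasure (H t x) (lvl K \<rho> t) = 1"
    and H_zero: "\<forall>t\<ge>0. \<forall>x. x \<notin> lvl K \<rho> t \<longrightarrow> emeasure (H t x) (space (H t x)) = 0"
    and H_rev: "\<forall>t\<ge>0. \<forall>A\<in>sets borel. \<forall>B\<in>sets borel.
        (\<integral>\<^sup>+x. emeasure (H t x) B * indicator A x \<partial>unif K \<rho> t)
      = (\<integral>\<^sup>+x. emeasure (H t x) A * indicator B x \<partial>unif K \<rho> t)"
begin

declare K_borel[measurable] \<rho>_meas[measurable]

lemma lvl_pred[measurable]: "Measurable.pred (borel \<Otimes>\<^sub>M borel) (\<lambda>(t,x). x \<in> lvl K \<rho> t)"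
  unfolding lvl_def by measurable

lemma lvl_sets[measurable]: "lvl K \<rho> t \<in> sets borel"
  unfolding lvl_def by measurable

lemma H_meas1: "H t \<in> borel \<rightarrow>\<^sub>M subprob_algebra borel"
  using H_meas by measurable

lemma sets_H: "sets (H t x) = sets borel"
  using sets_kernel[OF H_meas1[of t], of x] by (simp only: space_borel UNIV_I)

lemma space_H: "space (H t x) = UNIV"
  using sets_eq_imp_space_eq[OF sets_H[of t x]] by simp

lemma kpow_Suc: "kpow P (Suc n) f = kop P (kpow P n f)"
  by (simp add: kpow_def)

lemma kpow_0: "kpow P 0 f = f"
  by (simp add: kpow_def)

lemma kpow_meas:
  assumes f: "f \<in> borel_measurable borel"
  shows "(\<lambda>(t,x). kpow (H t) n f x) \<in> borel_measurable (borel \<Otimes>\<^sub>M borel)"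
proof (induction n)
  case 0 
  have "(\<lambda>(t,x). f x) \<in> borel_measurable (borel \<Otimes>\<^sub>M borel)"
    using measurable_compose[OF measurable_snd f] unfolding o_def split_beta' .
  then show ?case unfolding kpow_0 .
next
  case (Suc n)
  have "(\<lambda>p. integral\<^sup>L (H (fst p) (snd p)) (\<lambda>y. kpow (H (fst p)) n f y)) \<in> borel_measurable (borel \<Otimes>\<^sub>M borel)"
  proof (rule integral_measurable_subprob_algebra2[where N=borel and f="\<lambda>p y. kpow (H (fst p)) n f y" and L="\<lambda>p. H (fst p) (snd p)"])
    have "(\<lambda>q. (fst (fst q), snd q)) \<in> ((borel::real measure) \<Otimes>\<^sub>M (borel::'a measure)) \<Otimes>\<^sub>M borel \<rightarrow>\<^sub>M borel \<Otimes>\<^sub>M (borel::'a measure)"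
      by (rule measurable_Pair[OF measurable_compose[OF measurable_fst measurable_fst] measurable_snd])
    from measurable_compose[OF this Suc] 
    show "(\<lambda>(p::real\<times>'a, y). kpow (H (fst p)) n f y) \<in> borel_measurable ((borel \<Otimes>\<^sub>M borel) \<Otimes>\<^sub>M borel)"
      by (simp only: split_beta' o_def fst_conv snd_conv case_prod_beta)
    show "(\<lambda>p. H (fst p) (snd p)) \<in> borel \<Otimes>\<^sub>M borel \<rightarrow>\<^sub>M subprob_algebra borel"
      using H_meas by (simp only: split_beta')
  qed
  then show ?case unfolding kpow_Suc kop_def by (simp only: split_beta')
qed


lemma lvl_anti: "s \<le> t \<Longrightarrow> lvl K \<rho> t \<subseteq> lvl K \<rho> s"
  unfolding lvl_def by auto

lemma lvl_nonpos: "t \<le> 0 \<Longrightarrow> lvl K \<rho> t = K"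
  unfolding lvl_def using \<rho>_nonneg by force

abbreviation "S \<equiv> esssup lborel (\<lambda>x. ereal (indicator K x * \<rho> x))"

lemma S_pos: "0 < S"
proof (rule ccontr)
  assume "\<not> 0 < S"
  then have S0: "S \<le> 0" by simp
  have "AE x in lborel. ereal (indicator K x * \<rho> x) \<le> S" by (rule esssup_AE)
  then have "AE x in lborel. ennreal (indicator K x * \<rho> x) = 0"
  proof (rule AE_mp, intro AE_I2 impI)
    fix x assume "ereal (indicator K x * \<rho> x) \<le> S"
    then have "ereal (indicator K x * \<rho> x) \<le> ereal 0" using S0 unfolding zero_ereal_def by (rule order_trans)
    then have "indicator K x * \<rho> x \<le> 0" by simp
    then show "ennreal (indicator K x * \<rho> x) = 0" by (simp add: ennreal_eq_0_iff)
  qed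
  then have "(\<integral>\<^sup>+x. ennreal (indicator K x * \<rho> x) \<partial>lborel) = 0"
    by (simp add: nn_integral_cong_AE)
  with Z_pos show False by simp
qed

lemma V_fin: "0 < t \<Longrightarrow> emeasure lborel (lvl K \<rho> t) < \<infinity>"
proof -
  assume t: "0 < t"
  show ?thesis
  proof (cases "ereal t < S")
    case True with vol_lvl t show ?thesis by blast
  next
    case False
    then have St: "S \<le> ereal t" by simp
    with S_pos obtain s where s: "S = ereal s" by (cases S) auto
    with S_pos St have s0: "0 < s" "s \<le> t" by auto
    have "0 < s/2 \<and> ereal (s/2) < S" using s s0 by simp
    with vol_lvl have "emeasure lborel (lvl K \<rho> (s/2)) < \<infinity>" by blast
    moreover have "emeasure lborel (lvl K \<rho> t) \<le> emeasure lborel (lvl K \<rho> (s/2))"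
    proof (rule emeasure_mono)
      show "lvl K \<rho> t \<subseteq> lvl K \<rho> (s/2)" using s0 by (intro lvl_anti) simp
      show "lvl K \<rho> (s/2) \<in> sets lborel" unfolding sets_lborel by (rule lvl_sets)
    qed
    ultimately show ?thesis by (meson le_less_trans)
  qed
qed

lemma E_null: "AE x in lborel. x \<in> K \<and> 0 < \<rho> x \<longrightarrow> emeasure lborel (lvl K \<rho> (\<rho> x)) \<noteq> 0"
proof -
  have A1: "AE x in lborel. ereal (indicator K x * \<rho> x) \<le> S" by (rule esssup_AE)
  have A2: "AE x in lborel. x \<in> K \<and> ereal (\<rho> x) = S \<longrightarrow> emeasure lborel (lvl K \<rho> (\<rho> x)) \<noteq> 0"
  proof (cases "\<exists>s. S = ereal s")
    case False then show ?thesis by (intro AE_I2) metis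
  next
    case True
    then obtain s where s: "S = ereal s" by auto
    show ?thesis
    proof (cases "emeasure lborel (lvl K \<rho> s) = 0")
      case False then show ?thesis using s by (intro AE_I2) auto
    next
      case True
      have "AE x in lborel. x \<notin> lvl K \<rho> s"
        by (rule AE_not_in) (use True lvl_sets[of s] in \<open>simp add: null_sets_def\<close>)
      then show ?thesis
        by (rule AE_mp) (intro AE_I2, auto simp: s lvl_def)
    qed
  qed
  show ?thesis using A1 A2
  proof (eventually_elim)
    case (elim x)
    show ?case
    proof
      assume x: "x \<in> K \<and> 0 < \<rho> x"
      show "emeasure lborel (lvl K \<rho> (\<rho> x)) \<noteq> 0"
      proof (cases "ereal (\<rho> x) < S")
        case True
        with vol_lvl x show ?thesis by auto
      next
        case False
        with elim(1) x have "ereal (\<rho> x) = S" by auto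
        with elim(2) x show ?thesis by auto
      qed
    qed
  qed
qed


lemma kpow_meas1:
  assumes f: "f \<in> borel_measurable borel"
  shows "kpow (H t) n f \<in> borel_measurable borel"
proof -
  have "Pair t \<in> borel \<rightarrow>\<^sub>M (borel::real measure) \<Otimes>\<^sub>M (borel::'a measure)"
    by (rule measurable_Pair1') simp
  from measurable_compose[OF this kpow_meas[OF f, of n]] show ?thesis
    by (simp add: o_def)
qed

lemma V_sets: "lvl K \<rho> t \<in> sets lborel"
  unfolding sets_lborel by (rule lvl_sets)

lemma prob_unif: "0 < t \<Longrightarrow> emeasure lborel (lvl K \<rho> t) \<noteq> 0 \<Longrightarrow> prob_space (unif K \<rho> t)"
  unfolding unif_def using V_fin[of t] by (intro prob_space_uniform_measure) auto

lemma sets_unif[simp]: "sets (unif K \<rho> t) = sets borel"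
  unfolding unif_def by simp

lemma space_unif[simp]: "space (unif K \<rho> t) = UNIV"
  unfolding unif_def by simp

lemma nn_unif:
  assumes g: "g \<in> borel_measurable borel"
  shows "(\<integral>\<^sup>+x. g x \<partial>unif K \<rho> t) = (\<integral>\<^sup>+x. g x * indicator (lvl K \<rho> t) x \<partial>lborel) / emeasure lborel (lvl K \<rho> t)"
  unfolding unif_def by (rule nn_integral_uniform_measure) (use g V_sets in simp_all)

lemma int_unif:
  assumes t: "0 < t" and f: "f \<in> borel_measurable borel"
  shows "integral\<^sup>L (unif K \<rho> t) f = (\<integral>x. indicator (lvl K \<rho> t) x * f x \<partial>lborel) / measure lborel (lvl K \<rho> t)"
proof (cases "emeasure lborel (lvl K \<rho> t) = 0")
  case True
  have "emeasure (unif K \<rho> t) (space (unif K \<rho> t)) = 0"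
    unfolding unif_def using True V_sets[of t] by simp
  then have "AE x in unif K \<rho> t. f x = 0"
    by (intro AE_I'[of "space (unif K \<rho> t)"]) (auto simp: null_sets_def)
  then have "integral\<^sup>L (unif K \<rho> t) f = 0" by (rule integral_eq_zero_AE)
  moreover have "measure lborel (lvl K \<rho> t) = 0" using True by (simp add: measure_def)
  ultimately show ?thesis by simp
next
  case False
  define m where "m = measure lborel (lvl K \<rho> t)"
  have em: "emeasure lborel (lvl K \<rho> t) = ennreal m"
    unfolding m_def using V_fin[OF t] by (simp add: emeasure_eq_ennreal_measure less_top)
  with False have m0: "0 < m" by (simp add: m_def measure_nonneg order_less_le ennreal_eq_0_iff)
  have "unif K \<rho> t = density lborel (\<lambda>x. ennreal (indicator (lvl K \<rho> t) x / m))"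
    unfolding unif_def uniform_measure_def em
    by (intro arg_cong[where f="density lborel"] ext) (simp add: divide_ennreal m0 ennreal_indicator[symmetric])
  then have "integral\<^sup>L (unif K \<rho> t) f = integral\<^sup>L (density lborel (\<lambda>x. ennreal (indicator (lvl K \<rho> t) x / m))) f"
    by simp
  also have "\<dots> = (\<integral>x. (indicator (lvl K \<rho> t) x / m) * f x \<partial>lborel)"
    by (subst integral_density) (use f V_sets m0 in auto)
  also have "\<dots> = (\<integral>x. indicator (lvl K \<rho> t) x * f x \<partial>lborel) / m"
    by (simp add: mult.commute)
  finally show ?thesis unfolding m_def .
qed


lemma pair_borel_lborel: "sets ((borel::real measure) \<Otimes>\<^sub>M (lborel::'a measure)) = sets (borel \<Otimes>\<^sub>M borel)"
  by (rule sets_pair_measure_cong) simp_all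

lemma lvl_set_pair: "{p \<in> space ((borel::real measure) \<Otimes>\<^sub>M (lborel::'a measure)). snd p \<in> lvl K \<rho> (fst p)} \<in> sets (borel \<Otimes>\<^sub>M lborel)"
proof -
  have "{p \<in> space ((borel::real measure) \<Otimes>\<^sub>M (borel::'a measure)). (case p of (t, x) \<Rightarrow> x \<in> lvl K \<rho> t)} \<in> sets (borel \<Otimes>\<^sub>M borel)"
    using lvl_pred unfolding pred_def .
  then show ?thesis unfolding pair_borel_lborel space_pair_measure by (simp add: split_beta')
qed

lemma ind_f_meas:
  fixes f :: "'a \<Rightarrow> real"
  assumes f: "f \<in> borel_measurable borel"
  shows "(\<lambda>(t, x). indicator (lvl K \<rho> t) x * f x) \<in> borel_measurable ((borel::real measure) \<Otimes>\<^sub>M (lborel::'a measure))"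
proof -
  have "(\<lambda>(t, x). indicator (lvl K \<rho> t) x * f x) \<in> borel_measurable ((borel::real measure) \<Otimes>\<^sub>M (borel::'a measure))"
    using f by measurable
  then show ?thesis by (simp only: measurable_cong_sets[OF pair_borel_lborel refl])
qed

lemma utilde_meas:
  fixes f :: "'a \<Rightarrow> real"
  assumes f: "f \<in> borel_measurable borel"
  shows "(\<lambda>t. (\<integral>x. indicator (lvl K \<rho> t) x * f x \<partial>lborel) / measure lborel (lvl K \<rho> t)) \<in> borel_measurable borel"
proof (rule borel_measurable_divide)
  show "(\<lambda>t. \<integral>x. indicator (lvl K \<rho> t) x * f x \<partial>lborel) \<in> borel_measurable borel"
    using lborel.borel_measurable_lebesgue_integral[of "\<lambda>t x. indicator (lvl K \<rho> t) x * f x" borel] ind_f_meas[OF f]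
    by simp
  show "(\<lambda>t. measure lborel (lvl K \<rho> t)) \<in> borel_measurable borel"
    by (rule lborel.measurable_measure[OF _ lvl_set_pair]) simp
qed

lemma unif_nonpos: "t \<le> 0 \<Longrightarrow> unif K \<rho> t = unif K \<rho> 0"
  unfolding unif_def using lvl_nonpos[of t] lvl_nonpos[of 0] by simp

lemma u_meas:
  fixes f :: "'a \<Rightarrow> real"
  assumes f: "f \<in> borel_measurable borel"
  shows "(\<lambda>t. integral\<^sup>L (unif K \<rho> t) f) \<in> borel_measurable borel"
proof -
  have eq: "integral\<^sup>L (unif K \<rho> t) f = (if 0 < t then (\<integral>x. indicator (lvl K \<rho> t) x * f x \<partial>lborel) / measure lborel (lvl K \<rho> t) else integral\<^sup>L (unif K \<rho> 0) f)" for t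
    using int_unif[OF _ f, of t] unif_nonpos[of t] by auto
  have "(\<lambda>t. if 0 < t then (\<integral>x. indicator (lvl K \<rho> t) x * f x \<partial>lborel) / measure lborel (lvl K \<rho> t) else integral\<^sup>L (unif K \<rho> 0) f) \<in> borel_measurable borel"
  proof (rule measurable_If[OF utilde_meas[OF f] measurable_const])
    have "{x \<in> space borel. 0 < (x::real)} = {0<..}" by auto
    then show "{x \<in> space borel. 0 < (x::real)} \<in> sets borel" by simp
  qed (simp only: space_borel UNIV_I)
  also have "(\<lambda>t. if 0 < t then (\<integral>x. indicator (lvl K \<rho> t) x * f x \<partial>lborel) / measure lborel (lvl K \<rho> t) else integral\<^sup>L (unif K \<rho> 0) f) = (\<lambda>t. integral\<^sup>L (unif K \<rho> t) f)"
    using eq by (intro ext) (rule sym)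
  finally show ?thesis .
qed

lemma H_sub: "subprob_space (H t x)"
  by (rule subprob_space_kernel[OF H_meas1]) simp

lemma rev_ae:
  assumes t: "0 \<le> t" and h: "h \<in> borel_measurable borel" and ae: "AE x in unif K \<rho> t. h x = 0"
  shows "AE x in unif K \<rho> t. kop (H t) h x = 0"
proof -
  define N where "N = {x. h x \<noteq> 0}"
  have N: "N \<in> sets borel" unfolding N_def using h by measurable
  have rev: "(\<integral>\<^sup>+x. emeasure (H t x) UNIV * indicator N x \<partial>unif K \<rho> t) = (\<integral>\<^sup>+x. emeasure (H t x) N * indicator UNIV x \<partial>unif K \<rho> t)"
    using H_rev t N by simp
  have "(\<integral>\<^sup>+x. emeasure (H t x) UNIV * indicator N x \<partial>unif K \<rho> t) = 0"
  proof (rule nn_integral_0_iff_AE[THEN iffD2])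
    show "(\<lambda>x. emeasure (H t x) UNIV * indicator N x) \<in> borel_measurable (unif K \<rho> t)"
    proof -
      have "(\<lambda>x. emeasure (H t x) UNIV) \<in> borel_measurable borel"
        using measurable_compose[OF H_meas1 measurable_emeasure_subprob_algebra[of UNIV borel]] by (simp add: o_def)
      then have "(\<lambda>x. emeasure (H t x) UNIV * indicator N x) \<in> borel_measurable borel"
        using N by measurable
      then show ?thesis by (simp only: measurable_cong_sets[OF sets_unif[of t] refl])
    qed
    show "AE x in unif K \<rho> t. emeasure (H t x) UNIV * indicator N x = 0"
      using ae by (rule AE_mp) (intro AE_I2, simp add: N_def)
  qed
  then have z: "(\<integral>\<^sup>+x. emeasure (H t x) N \<partial>unif K \<rho> t) = 0" using rev by simp
  have mN: "(\<lambda>x. emeasure (H t x) N) \<in> borel_measurable (unif K \<rho> t)"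
  proof -
    have "(\<lambda>x. emeasure (H t x) N) \<in> borel_measurable borel"
      using measurable_compose[OF H_meas1 measurable_emeasure_subprob_algebra[OF N]] by (simp add: o_def)
    then show ?thesis by (simp only: measurable_cong_sets[OF sets_unif[of t] refl])
  qed
  have "AE x in unif K \<rho> t. emeasure (H t x) N = 0"
    using z nn_integral_0_iff_AE[OF mN] by simp
  then show ?thesis
  proof (rule AE_mp, intro AE_I2 impI)
    fix x assume x0: "emeasure (H t x) N = 0"
    have "AE y in H t x. h y = 0"
    proof (rule AE_I'[of N])
      show "N \<in> null_sets (H t x)" using x0 N sets_H[of t x] by (simp add: null_sets_def)
      show "{y \<in> space (H t x). \<not> h y = 0} \<subseteq> N" unfolding N_def by auto
    qed
    then show "kop (H t) h x = 0" unfolding kop_def by (rule integral_eq_zero_AE)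
  qed
qed

lemma kpow_ae:
  assumes t: "0 \<le> t" and f: "f \<in> borel_measurable borel" and ae: "AE x in unif K \<rho> t. f x = 0"
  shows "AE x in unif K \<rho> t. kpow (H t) n f x = 0"
proof (induction n)
  case 0 then show ?case using ae by (simp add: kpow_0)
next
  case (Suc n)
  show ?case unfolding kpow_Suc by (rule rev_ae[OF t kpow_meas1[OF f] Suc])
qed


lemma per_t:
  fixes f :: "'a \<Rightarrow> real"
  assumes f: "f \<in> borel_measurable borel" and t: "0 < t"
    and bfin: "(\<integral>\<^sup>+x. indicator (lvl K \<rho> t) x * ennreal ((f x)\<^sup>2) \<partial>lborel) < \<infinity>"
  shows "(\<integral>\<^sup>+x. indicator (lvl K \<rho> t) x * ennreal ((kpow (H t) k f x - integral\<^sup>L (unif K \<rho> t) f)\<^sup>2) \<partial>lborel)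
     \<le> (opnorm (unif K \<rho> t) (\<lambda>f y. kpow (H t) k f y - integral\<^sup>L (unif K \<rho> t) f))\<^sup>2 * (\<integral>\<^sup>+x. indicator (lvl K \<rho> t) x * ennreal ((f x)\<^sup>2) \<partial>lborel)"
    and "(\<integral>\<^sup>+x. indicator (lvl K \<rho> t) x * ennreal ((f x)\<^sup>2) \<partial>lborel) = 0 \<Longrightarrow>
      (\<integral>\<^sup>+x. indicator (lvl K \<rho> t) x * ennreal ((kpow (H t) k f x - integral\<^sup>L (unif K \<rho> t) f)\<^sup>2) \<partial>lborel) = 0"
proof -
  define U where "U = unif K \<rho> t"
  define g where "g y = kpow (H t) k f y - integral\<^sup>L U f" for y
  define a where "a = (\<integral>\<^sup>+x. indicator (lvl K \<rho> t) x * ennreal ((g x)\<^sup>2) \<partial>lborel)"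
  define b where "b = (\<integral>\<^sup>+x. indicator (lvl K \<rho> t) x * ennreal ((f x)\<^sup>2) \<partial>lborel)"
  define N where "N = opnorm U (\<lambda>f y. kpow (H t) k f y - integral\<^sup>L U f)"
  define V where "V = emeasure lborel (lvl K \<rho> t)"
  have main: "a \<le> N\<^sup>2 * b \<and> (b = 0 \<longrightarrow> a = 0)"
  proof (cases "V = 0")
    case True
    have "AE x in lborel. x \<notin> lvl K \<rho> t"
      by (rule AE_not_in) (use True V_sets[of t] in \<open>simp add: null_sets_def V_def\<close>)
    then have "AE x in lborel. indicator (lvl K \<rho> t) x * ennreal ((g x)\<^sup>2) = 0"
      by (rule AE_mp) (intro AE_I2, simp)
    from nn_integral_cong_AE[OF this] have "a = 0" unfolding a_def by simp
    then show ?thesis by simp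
  next
    case False
    have Vfin: "V < \<infinity>" unfolding V_def by (rule V_fin[OF t])
    have Vtop: "V \<noteq> \<top>" using Vfin by simp
    interpret U: prob_space U unfolding U_def using prob_unif[OF t] False V_def by simp
    have sU: "sets U = sets borel" unfolding U_def by simp
    have gm: "g \<in> borel_measurable borel"
      unfolding g_def using kpow_meas1[OF f, of t k] by measurable
    define \<alpha> where "\<alpha> = (\<integral>\<^sup>+y. ennreal ((g y)\<^sup>2) \<partial>U)"
    define \<beta> where "\<beta> = (\<integral>\<^sup>+y. ennreal ((f y)\<^sup>2) \<partial>U)"
    have g2m: "(\<lambda>y. ennreal ((g y)\<^sup>2)) \<in> borel_measurable borel" using gm by measurable
    have f2m: "(\<lambda>y. ennreal ((f y)\<^sup>2)) \<in> borel_measurable borel" using f by measurable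
    have VV: "x / V * V = x" for x
      using False Vtop by (simp add: ennreal_divide_times ennreal_divide_self less_top)
    have "\<alpha> = a / V"
      unfolding \<alpha>_def U_def nn_unif[OF g2m] a_def V_def by (simp add: mult.commute)
    then have aa: "a = \<alpha> * V" using VV by simp
    have "\<beta> = b / V"
      unfolding \<beta>_def U_def nn_unif[OF f2m] b_def V_def by (simp add: mult.commute)
    then have bb: "b = \<beta> * V" using VV by simp
    have z: "\<alpha> = 0" if b0: "\<beta> = 0"
    proof -
      have f2mU: "(\<lambda>y. ennreal ((f y)\<^sup>2)) \<in> borel_measurable U"
        using f2m by (simp only: measurable_cong_sets[OF sU refl])
      have "AE y in U. ennreal ((f y)\<^sup>2) = 0"
        using b0 nn_integral_0_iff_AE[OF f2mU] unfolding \<beta>_def by simp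
      then have ae: "AE y in U. f y = 0" by (rule AE_mp) (intro AE_I2, simp)
      have ae2: "AE y in U. kpow (H t) k f y = 0"
        unfolding U_def by (rule kpow_ae[OF less_imp_le[OF t] f]) (use ae in \<open>simp only: U_def\<close>)
      have i0: "integral\<^sup>L U f = 0" using ae by (rule integral_eq_zero_AE)
      have "AE y in U. ennreal ((g y)\<^sup>2) = 0"
        using ae2 by (rule AE_mp) (intro AE_I2, simp add: g_def i0)
      from nn_integral_cong_AE[OF this] show ?thesis unfolding \<alpha>_def by simp
    qed
    show ?thesis
    proof (cases "\<beta> = 0")
      case True
      then show ?thesis using z aa by simp
    next
      case b0: False
      have bfin': "\<beta> < \<infinity>"
      proof (rule ccontr)
        assume "\<not> \<beta> < \<infinity>"
        then have "\<beta> = \<top>" using less_top[of \<beta>] by simp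
        then have "b = \<top>" using bb False by (simp add: ennreal_mult_eq_top_iff)
        with bfin show False unfolding b_def by simp
      qed
      define r where "r = sqrt (enn2real \<beta>)"
      have \<beta>r: "\<beta> = ennreal (r\<^sup>2)" unfolding r_def using bfin' by (cases \<beta>) auto
      have r0: "0 < r" using b0 \<beta>r unfolding r_def by (cases \<beta>) (auto simp: ennreal_eq_0_iff)
      define f' where "f' y = (1/r) * f y" for y
      have f'm: "f' \<in> borel_measurable U" unfolding f'_def using f by (simp add: measurable_cong_sets[OF sU refl])
      have inv: "ennreal (1/r\<^sup>2) * ennreal (r\<^sup>2) = 1" using r0 by (simp add: ennreal_mult[symmetric])
      have "(\<integral>\<^sup>+y. ennreal ((f' y)\<^sup>2) \<partial>U) = (\<integral>\<^sup>+y. ennreal (1/r\<^sup>2) * ennreal ((f y)\<^sup>2) \<partial>U)"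
        unfolding f'_def by (intro nn_integral_cong) (simp add: ennreal_mult[symmetric] power_mult_distrib power_divide)
      also have "\<dots> = ennreal (1/r\<^sup>2) * \<beta>" unfolding \<beta>_def
        by (rule nn_integral_cmult) (use f2m in \<open>simp add: measurable_cong_sets[OF sU refl]\<close>)
      also have "\<dots> = 1" using inv \<beta>r by simp
      finally have l2f': "l2norm U f' \<le> 1" unfolding l2norm_def using ennsqrt_of_sq[of 1] by simp
      have Af': "(\<lambda>y. kpow (H t) k f' y - integral\<^sup>L U f') = (\<lambda>y. (1/r) * g y)"
        unfolding f'_def g_def kpow_homog by (simp add: right_diff_distrib)
      have "l2norm U (\<lambda>y. kpow (H t) k f' y - integral\<^sup>L U f') \<le> N"
        unfolding N_def opnorm_def by (rule SUP_upper) (use f'm l2f' in simp)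
      then have "ennsqrt (\<integral>\<^sup>+y. ennreal (((1/r) * g y)\<^sup>2) \<partial>U) \<le> N" unfolding Af' l2norm_def .
      moreover have "(\<integral>\<^sup>+y. ennreal (((1/r) * g y)\<^sup>2) \<partial>U) = ennreal (1/r\<^sup>2) * \<alpha>"
      proof -
        have "(\<integral>\<^sup>+y. ennreal (((1/r) * g y)\<^sup>2) \<partial>U) = (\<integral>\<^sup>+y. ennreal (1/r\<^sup>2) * ennreal ((g y)\<^sup>2) \<partial>U)"
          by (intro nn_integral_cong) (simp add: ennreal_mult[symmetric] power_mult_distrib power_divide)
        also have "\<dots> = ennreal (1/r\<^sup>2) * \<alpha>" unfolding \<alpha>_def
          by (rule nn_integral_cmult) (use g2m in \<open>simp add: measurable_cong_sets[OF sU refl]\<close>)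
        finally show ?thesis .
      qed
      ultimately have "ennreal (1/r\<^sup>2) * \<alpha> \<le> N\<^sup>2" by (simp add: ennsqrt_le_iff)
      then have "ennreal (r\<^sup>2) * (ennreal (1/r\<^sup>2) * \<alpha>) \<le> ennreal (r\<^sup>2) * N\<^sup>2"
        by (rule mult_left_mono) simp
      moreover have "ennreal (r\<^sup>2) * (ennreal (1/r\<^sup>2) * \<alpha>) = \<alpha>"
      proof -
        have inv': "ennreal (r\<^sup>2) * ennreal (1/r\<^sup>2) = 1" using r0 by (simp add: ennreal_mult[symmetric])
        show ?thesis unfolding mult.assoc[symmetric] inv' by simp
      qed
      moreover have "ennreal (r\<^sup>2) * N\<^sup>2 = N\<^sup>2 * \<beta>" unfolding \<beta>r by (rule mult.commute)
      ultimately have "\<alpha> \<le> N\<^sup>2 * \<beta>" by simp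
      then have "\<alpha> * V \<le> N\<^sup>2 * \<beta> * V" by (rule mult_right_mono) simp
      then have "a \<le> N\<^sup>2 * b" unfolding aa bb by (simp add: mult.assoc)
      moreover have "b \<noteq> 0" using bb b0 False by simp
      ultimately show ?thesis by simp
    qed
  qed
  then show "(\<integral>\<^sup>+x. indicator (lvl K \<rho> t) x * ennreal ((kpow (H t) k f x - integral\<^sup>L (unif K \<rho> t) f)\<^sup>2) \<partial>lborel)
     \<le> (opnorm (unif K \<rho> t) (\<lambda>f y. kpow (H t) k f y - integral\<^sup>L (unif K \<rho> t) f))\<^sup>2 * (\<integral>\<^sup>+x. indicator (lvl K \<rho> t) x * ennreal ((f x)\<^sup>2) \<partial>lborel)"
    and "(\<integral>\<^sup>+x. indicator (lvl K \<rho> t) x * ennreal ((f x)\<^sup>2) \<partial>lborel) = 0 \<Longrightarrow>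
      (\<integral>\<^sup>+x. indicator (lvl K \<rho> t) x * ennreal ((kpow (H t) k f x - integral\<^sup>L (unif K \<rho> t) f)\<^sup>2) \<partial>lborel) = 0"
    unfolding a_def b_def N_def g_def U_def by auto
qed


lemma lborel_sets_pair: "sets ((lborel::real measure) \<Otimes>\<^sub>M (lborel::'a measure)) = sets (borel \<Otimes>\<^sub>M borel)"
  by (rule sets_pair_measure_cong) simp_all

lemma lborel_sets_pair': "sets ((lborel::'a measure) \<Otimes>\<^sub>M (lborel::real measure)) = sets (borel \<Otimes>\<^sub>M borel)"
  by (rule sets_pair_measure_cong) simp_all

lemma borel_lborel_sets_pair': "sets ((borel::'a measure) \<Otimes>\<^sub>M (lborel::real measure)) = sets (borel \<Otimes>\<^sub>M borel)"
  by (rule sets_pair_measure_cong) simp_all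

lemma swap_meas:
  fixes h :: "real \<Rightarrow> 'a \<Rightarrow> 'c::topological_space"
  assumes h: "(\<lambda>(t, x). h t x) \<in> borel_measurable (borel \<Otimes>\<^sub>M borel)"
  shows "(\<lambda>(x, t). h t x) \<in> borel_measurable (borel \<Otimes>\<^sub>M borel)"
proof -
  have "(\<lambda>p. (snd p, fst p)) \<in> (borel::'a measure) \<Otimes>\<^sub>M (borel::real measure) \<rightarrow>\<^sub>M borel \<Otimes>\<^sub>M borel"
    by (rule measurable_Pair[OF measurable_snd measurable_fst])
  from measurable_compose[OF this h] show ?thesis by (simp add: split_beta' o_def)
qed

lemma sec1:
  fixes h :: "real \<Rightarrow> 'a \<Rightarrow> 'c::topological_space"
  assumes h: "(\<lambda>(t, x). h t x) \<in> borel_measurable (borel \<Otimes>\<^sub>M borel)"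
  shows "(\<lambda>x. h t x) \<in> borel_measurable borel" and "(\<lambda>t. h t x) \<in> borel_measurable borel"
proof -
  have "Pair t \<in> borel \<rightarrow>\<^sub>M (borel::real measure) \<Otimes>\<^sub>M (borel::'a measure)"
    by (rule measurable_Pair1') simp
  from measurable_compose[OF this h] show "(\<lambda>x. h t x) \<in> borel_measurable borel" by (simp add: o_def)
  have "(\<lambda>t. (t, x)) \<in> borel \<rightarrow>\<^sub>M (borel::real measure) \<Otimes>\<^sub>M (borel::'a measure)"
    by (rule measurable_Pair2') simp
  from measurable_compose[OF this h] show "(\<lambda>t. h t x) \<in> borel_measurable borel" by (simp add: o_def)
qed

lemma tonelli:
  fixes h :: "real \<Rightarrow> 'a \<Rightarrow> ennreal"
  assumes h: "(\<lambda>(t, x). h t x) \<in> borel_measurable (borel \<Otimes>\<^sub>M borel)"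
  shows "(\<integral>\<^sup>+x. indicator K x * (\<integral>\<^sup>+t. indicator {0..\<rho> x} t * h t x \<partial>lborel) \<partial>lborel)
       = (\<integral>\<^sup>+t. indicator {0..} t * (\<integral>\<^sup>+x. indicator (lvl K \<rho> t) x * h t x \<partial>lborel) \<partial>lborel)"
proof -
  define F where "F t x = indicator {0..} t * (indicator (lvl K \<rho> t) x * h t x)" for t x
  have Fm: "(\<lambda>(t, x). F t x) \<in> borel_measurable (borel \<Otimes>\<^sub>M borel)"
    unfolding F_def using h by measurable
  have Fm': "(\<lambda>(t, x). F t x) \<in> borel_measurable ((lborel::real measure) \<Otimes>\<^sub>M (lborel::'a measure))"
    using Fm by (simp only: measurable_cong_sets[OF lborel_sets_pair refl])
  have eq: "indicator K x * (indicator {0..\<rho> x} t * h t x) = F t x" for t x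
    unfolding F_def by (auto simp: lvl_def split: split_indicator)
  have "(\<integral>\<^sup>+x. indicator K x * (\<integral>\<^sup>+t. indicator {0..\<rho> x} t * h t x \<partial>lborel) \<partial>lborel)
      = (\<integral>\<^sup>+x. (\<integral>\<^sup>+t. indicator K x * (indicator {0..\<rho> x} t * h t x) \<partial>lborel) \<partial>lborel)"
  proof (rule nn_integral_cong)
    fix x
    have "(\<lambda>t. indicator {0..\<rho> x} t * h t x) \<in> borel_measurable lborel"
      using sec1(2)[OF h, of x] by simp
    then show "indicator K x * (\<integral>\<^sup>+t. indicator {0..\<rho> x} t * h t x \<partial>lborel) = (\<integral>\<^sup>+t. indicator K x * (indicator {0..\<rho> x} t * h t x) \<partial>lborel)"
      by (rule nn_integral_cmult[symmetric])
  qed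
  also have "\<dots> = (\<integral>\<^sup>+x. (\<integral>\<^sup>+t. F t x \<partial>lborel) \<partial>lborel)" by (simp only: eq)
  also have "\<dots> = (\<integral>\<^sup>+t. (\<integral>\<^sup>+x. F t x \<partial>lborel) \<partial>lborel)"
    by (rule lborel_pair.Fubini'[OF Fm'])
  also have "\<dots> = (\<integral>\<^sup>+t. indicator {0..} t * (\<integral>\<^sup>+x. indicator (lvl K \<rho> t) x * h t x \<partial>lborel) \<partial>lborel)"
  proof (rule nn_integral_cong)
    fix t
    have "(\<lambda>x. indicator (lvl K \<rho> t) x * h t x) \<in> borel_measurable lborel"
      using sec1(1)[OF h, of t] by simp
    then show "(\<integral>\<^sup>+x. F t x \<partial>lborel) = indicator {0..} t * (\<integral>\<^sup>+x. indicator (lvl K \<rho> t) x * h t x \<partial>lborel)"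
      unfolding F_def by (rule nn_integral_cmult)
  qed
  finally show ?thesis .
qed



lemma c_facts: "0 < normconst K \<rho>" "(\<integral>\<^sup>+x. ennreal (indicator K x * \<rho> x) \<partial>lborel) = ennreal (normconst K \<rho>)"
proof -
  show "(\<integral>\<^sup>+x. ennreal (indicator K x * \<rho> x) \<partial>lborel) = ennreal (normconst K \<rho>)"
    unfolding normconst_def using Z_fin by simp
  show "0 < normconst K \<rho>" unfolding normconst_def using Z_fin Z_pos by (simp add: enn2real_positive_iff)
qed

lemma w_meas: "(\<lambda>x. ennreal (indicator K x * \<rho> x / normconst K \<rho>)) \<in> borel_measurable lborel"
  by simp

lemma target_nn:
  assumes g: "g \<in> borel_measurable borel"
  shows "(\<integral>\<^sup>+x. g x \<partial>target K \<rho>) = (\<integral>\<^sup>+x. ennreal (indicator K x * \<rho> x / normconst K \<rho>) * g x \<partial>lborel)"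
  unfolding target_def by (rule nn_integral_density[OF w_meas]) (use g in simp)

lemma w_split: "ennreal (indicator K x * \<rho> x / normconst K \<rho>) * ennreal y = ennreal (1 / normconst K \<rho>) * ennreal (indicator K x * (\<rho> x * y))"
  if "0 \<le> y" for y
proof (cases "x \<in> K")
  case True
  then have r: "0 \<le> \<rho> x" using \<rho>_nonneg by auto
  have c: "0 < normconst K \<rho>" by (rule c_facts(1))
  show ?thesis using True r c that
    by (simp add: ennreal_mult[symmetric] divide_nonneg_pos mult_nonneg_nonneg)
qed simp

lemma int_Icc_const:
  assumes "x \<in> K"
  shows "(\<integral>\<^sup>+t. indicator {0..\<rho> x} t * y \<partial>lborel) = y * ennreal (\<rho> x)"
proof -
  have r: "0 \<le> \<rho> x" using \<rho>_nonneg assms by auto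
  have "(\<integral>\<^sup>+t. indicator {0..\<rho> x} t * y \<partial>lborel) = (\<integral>\<^sup>+t. indicator {0..\<rho> x} t \<partial>lborel) * y"
    by (rule nn_integral_multc) simp
  then show ?thesis using r by (simp add: mult.commute)
qed

lemma Icc_pred: "Measurable.pred ((borel::'a measure) \<Otimes>\<^sub>M (borel::real measure)) (\<lambda>p. snd p \<in> {0..\<rho> (fst p)})"
  unfolding atLeastAtMost_iff by measurable

context
  fixes f :: "'a \<Rightarrow> real" and k :: nat
  assumes f: "f \<in> borel_measurable borel"
begin

lemma G_meas: "(\<lambda>(t, x). kpow (H t) k f x - integral\<^sup>L (unif K \<rho> t) f) \<in> borel_measurable (borel \<Otimes>\<^sub>M borel)"
proof -
  have u: "(\<lambda>(t::real, x::'a). integral\<^sup>L (unif K \<rho> t) f) \<in> borel_measurable (borel \<Otimes>\<^sub>M borel)"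
    using measurable_compose[OF measurable_fst u_meas[OF f]] by (simp add: o_def split_beta')
  show ?thesis using kpow_meas[OF f, of k] u by measurable
qed

lemma aa_meas: "(\<lambda>t. \<integral>\<^sup>+x. indicator (lvl K \<rho> t) x * ennreal ((kpow (H t) k f x - integral\<^sup>L (unif K \<rho> t) f)\<^sup>2) \<partial>lborel) \<in> borel_measurable borel"
proof -
  have "(\<lambda>(t, x). indicator (lvl K \<rho> t) x * ennreal ((kpow (H t) k f x - integral\<^sup>L (unif K \<rho> t) f)\<^sup>2)) \<in> borel_measurable ((borel::real measure) \<Otimes>\<^sub>M (borel::'a measure))"
    using G_meas by measurable
  then have "(\<lambda>(t, x). indicator (lvl K \<rho> t) x * ennreal ((kpow (H t) k f x - integral\<^sup>L (unif K \<rho> t) f)\<^sup>2)) \<in> borel_measurable ((borel::real measure) \<Otimes>\<^sub>M (lborel::'a measure))"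
    by (simp only: measurable_cong_sets[OF pair_borel_lborel refl])
  from lborel.borel_measurable_nn_integral[OF this] show ?thesis by simp
qed

lemma bb_meas: "(\<lambda>t. \<integral>\<^sup>+x. indicator (lvl K \<rho> t) x * ennreal ((f x)\<^sup>2) \<partial>lborel) \<in> borel_measurable borel"
proof -
  have "(\<lambda>(t, x). indicator (lvl K \<rho> t) x * ennreal ((f x)\<^sup>2)) \<in> borel_measurable ((borel::real measure) \<Otimes>\<^sub>M (borel::'a measure))"
    using f by measurable
  then have "(\<lambda>(t, x). indicator (lvl K \<rho> t) x * ennreal ((f x)\<^sup>2)) \<in> borel_measurable ((borel::real measure) \<Otimes>\<^sub>M (lborel::'a measure))"
    by (simp only: measurable_cong_sets[OF pair_borel_lborel refl])
  from lborel.borel_measurable_nn_integral[OF this] show ?thesis by simp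
qed

lemma T_meas: "(\<lambda>x. \<integral>\<^sup>+t. indicator {0..\<rho> x} t * ennreal ((kpow (H t) k f x - integral\<^sup>L (unif K \<rho> t) f)\<^sup>2) \<partial>lborel) \<in> borel_measurable borel"
proof -
  have G': "(\<lambda>(x, t). kpow (H t) k f x - integral\<^sup>L (unif K \<rho> t) f) \<in> borel_measurable ((borel::'a measure) \<Otimes>\<^sub>M (borel::real measure))"
    using swap_meas[OF G_meas] .
  have "(\<lambda>(x, t). indicator {0..\<rho> x} t * ennreal ((kpow (H t) k f x - integral\<^sup>L (unif K \<rho> t) f)\<^sup>2)) \<in> borel_measurable ((borel::'a measure) \<Otimes>\<^sub>M (borel::real measure))"
    using G'[unfolded split_beta'] Icc_pred by measurable
  then have "(\<lambda>(x, t). indicator {0..\<rho> x} t * ennreal ((kpow (H t) k f x - integral\<^sup>L (unif K \<rho> t) f)\<^sup>2)) \<in> borel_measurable ((borel::'a measure) \<Otimes>\<^sub>M (lborel::real measure))"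
    by (simp only: measurable_cong_sets[OF borel_lborel_sets_pair' refl])
  from lborel.borel_measurable_nn_integral[OF this] show ?thesis by simp
qed

lemma D_meas: "(\<lambda>x. hybk K \<rho> H k f x - simple_slice K \<rho> f x) \<in> borel_measurable borel"
proof -
  have P': "(\<lambda>(x, t). kpow (H t) k f x) \<in> borel_measurable ((borel::'a measure) \<Otimes>\<^sub>M (borel::real measure))"
    using swap_meas[OF kpow_meas[OF f, of k]] .
  have "(\<lambda>(x, t). indicator {0..\<rho> x} t *\<^sub>R kpow (H t) k f x) \<in> borel_measurable ((borel::'a measure) \<Otimes>\<^sub>M (borel::real measure))"
    using P'[unfolded split_beta'] Icc_pred by measurable
  then have "(\<lambda>(x, t). indicator {0..\<rho> x} t *\<^sub>R kpow (H t) k f x) \<in> borel_measurable ((borel::'a measure) \<Otimes>\<^sub>M (lborel::real measure))"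
    by (simp only: measurable_cong_sets[OF borel_lborel_sets_pair' refl])
  from lborel.borel_measurable_lebesgue_integral[OF this]
  have h1: "(\<lambda>x. set_lebesgue_integral lborel {0..\<rho> x} (\<lambda>t. kpow (H t) k f x)) \<in> borel_measurable borel"
    unfolding set_lebesgue_integral_def by simp
  have u': "(\<lambda>(x::'a, t::real). integral\<^sup>L (unif K \<rho> t) f) \<in> borel_measurable (borel \<Otimes>\<^sub>M borel)"
    using measurable_compose[OF measurable_snd u_meas[OF f]] by (simp add: o_def split_beta')
  have "(\<lambda>(x, t). indicator {0..\<rho> x} t *\<^sub>R integral\<^sup>L (unif K \<rho> t) f) \<in> borel_measurable ((borel::'a measure) \<Otimes>\<^sub>M (borel::real measure))"
    using u'[unfolded split_beta'] Icc_pred by measurable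
  then have "(\<lambda>(x, t). indicator {0..\<rho> x} t *\<^sub>R integral\<^sup>L (unif K \<rho> t) f) \<in> borel_measurable ((borel::'a measure) \<Otimes>\<^sub>M (lborel::real measure))"
    by (simp only: measurable_cong_sets[OF borel_lborel_sets_pair' refl])
  from lborel.borel_measurable_lebesgue_integral[OF this]
  have h2: "(\<lambda>x. set_lebesgue_integral lborel {0..\<rho> x} (\<lambda>t. integral\<^sup>L (unif K \<rho> t) f)) \<in> borel_measurable borel"
    unfolding set_lebesgue_integral_def by simp
  show ?thesis unfolding hybk_def simple_slice_def using h1 h2 by measurable
qed


lemma pointwise:
  assumes xK: "x \<in> K" and x0: "0 < \<rho> x" and Vx: "emeasure lborel (lvl K \<rho> (\<rho> x)) \<noteq> 0"
    and Bfin: "(\<integral>\<^sup>+t. indicator {0..} t * (\<integral>\<^sup>+y. indicator (lvl K \<rho> t) y * ennreal ((f y)\<^sup>2) \<partial>lborel) \<partial>lborel) < \<infinity>"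
  shows "ennreal (\<rho> x * (hybk K \<rho> H k f x - simple_slice K \<rho> f x)\<^sup>2)
     \<le> (\<integral>\<^sup>+t. indicator {0..\<rho> x} t * ennreal ((kpow (H t) k f x - integral\<^sup>L (unif K \<rho> t) f)\<^sup>2) \<partial>lborel)"
    (is "_ \<le> ?T")
proof (cases "?T < \<infinity>")
  case False then show ?thesis by (simp add: top_unique less_top[symmetric])
next
  case Tfin: True
  define s where "s = \<rho> x"
  define G where "G t = kpow (H t) k f x - integral\<^sup>L (unif K \<rho> t) f" for t
  define u where "u t = integral\<^sup>L (unif K \<rho> t) f" for t
  define bb where "bb t = (\<integral>\<^sup>+y. indicator (lvl K \<rho> t) y * ennreal ((f y)\<^sup>2) \<partial>lborel)" for t
  have s0: "0 < s" using x0 s_def by simp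
  have A: "{0..s} \<in> sets lborel" by simp
  have Afin: "emeasure lborel {0..s} < \<infinity>" using s0 by simp
  have Gm: "G \<in> borel_measurable lborel"
    using sec1(2)[OF G_meas, of x] unfolding G_def by simp
  have um: "u \<in> borel_measurable lborel"
    using u_meas[OF f] unfolding u_def by simp
  have TG: "?T = (\<integral>\<^sup>+t. indicator {0..s} t * ennreal ((G t)\<^sup>2) \<partial>lborel)"
    unfolding s_def G_def ..
  have csG1: "set_integrable lborel {0..s} G"
    by (rule cs_ineq(1)[OF A Afin Gm]) (use Tfin TG in simp)
  have csG2: "ennreal ((LINT t:{0..s}|lborel. G t)\<^sup>2) \<le> emeasure lborel {0..s} * ?T"
    unfolding TG by (rule cs_ineq(2)[OF A Afin Gm]) (use Tfin TG in simp)
  define v where "v = emeasure lborel (lvl K \<rho> s)"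
  have v0: "0 < v" using Vx unfolding v_def s_def by (simp add: zero_less_iff_neq_zero)
  have bbm: "(\<lambda>t. indicator {0..} t * bb t) \<in> borel_measurable lborel"
    using bb_meas unfolding bb_def by simp
  have ub: "(\<integral>\<^sup>+t. indicator {0..s} t * ennreal ((u t)\<^sup>2) \<partial>lborel) \<le> (\<integral>\<^sup>+t. indicator {0..} t * bb t / v \<partial>lborel)"
  proof (rule nn_integral_mono_AE)
    show "AE t in lborel. indicator {0..s} t * ennreal ((u t)\<^sup>2) \<le> indicator {0..} t * bb t / v"
      using AE_lborel_singleton[of 0]
    proof (rule AE_mp, intro AE_I2 impI)
      fix t :: real assume t0: "t \<noteq> 0"
      show "indicator {0..s} t * ennreal ((u t)\<^sup>2) \<le> indicator {0..} t * bb t / v"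
      proof (cases "t \<in> {0..s}")
        case False then show ?thesis by simp
      next
        case True
        then have tpos: "0 < t" and ts: "t \<le> s" using t0 by auto
        have sub: "lvl K \<rho> s \<subseteq> lvl K \<rho> t" by (rule lvl_anti[OF ts])
        have vt: "v \<le> emeasure lborel (lvl K \<rho> t)" unfolding v_def
          by (rule emeasure_mono[OF sub V_sets])
        have Vt0: "emeasure lborel (lvl K \<rho> t) \<noteq> 0" using vt v0 by auto
        have pu: "prob_space (unif K \<rho> t)" by (rule prob_unif[OF tpos Vt0])
        have fU: "f \<in> borel_measurable (unif K \<rho> t)" using f by (simp only: measurable_cong_sets[OF sets_unif[of t] refl])
        have f2m: "(\<lambda>y. ennreal ((f y)\<^sup>2)) \<in> borel_measurable borel" using f by measurable
        have "ennreal ((u t)\<^sup>2) \<le> (\<integral>\<^sup>+y. ennreal ((f y)\<^sup>2) \<partial>unif K \<rho> t)"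
          unfolding u_def by (rule jensen_sq[OF pu fU])
        also have "\<dots> = bb t / emeasure lborel (lvl K \<rho> t)"
          unfolding nn_unif[OF f2m] bb_def by (simp add: mult.commute)
        also have "\<dots> \<le> bb t / v" by (rule ennreal_div_anti[OF v0 vt])
        finally show ?thesis using True tpos by simp
      qed
    qed
  qed
  also have "\<dots> = (\<integral>\<^sup>+t. indicator {0..} t * bb t \<partial>lborel) / v"
    by (rule nn_integral_divide[OF bbm])
  also have "\<dots> < \<infinity>" using Bfin v0[THEN less_imp_neq, symmetric] unfolding bb_def
    by (simp add: ennreal_divide_eq_top_iff less_top[symmetric])
  finally have ufin: "(\<integral>\<^sup>+t. indicator {0..s} t * ennreal ((u t)\<^sup>2) \<partial>lborel) < \<infinity>" .
  have csu: "set_integrable lborel {0..s} u" by (rule cs_ineq(1)[OF A Afin um ufin])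
  have Peq: "(\<lambda>t. kpow (H t) k f x) = (\<lambda>t. G t + u t)" unfolding G_def u_def by simp
  have hyb: "hybk K \<rho> H k f x = (1/s) * ((LINT t:{0..s}|lborel. G t) + (LINT t:{0..s}|lborel. u t))"
    unfolding hybk_def s_def[symmetric] Peq using set_integral_add(2)[OF csG1 csu] by simp
  have sim: "simple_slice K \<rho> f x = (1/s) * (LINT t:{0..s}|lborel. u t)"
    unfolding simple_slice_def s_def[symmetric] u_def ..
  define J where "J = (LINT t:{0..s}|lborel. G t)"
  have D: "hybk K \<rho> H k f x - simple_slice K \<rho> f x = J / s"
    unfolding hyb sim J_def by (simp add: algebra_simps)
  have "\<rho> x * (hybk K \<rho> H k f x - simple_slice K \<rho> f x)\<^sup>2 = J\<^sup>2 / s"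
    unfolding D s_def[symmetric] using s0 by (simp add: power2_eq_square)
  then have "ennreal (\<rho> x * (hybk K \<rho> H k f x - simple_slice K \<rho> f x)\<^sup>2) = ennreal (J\<^sup>2) / ennreal s"
    using s0 by (simp add: divide_ennreal)
  also have "\<dots> \<le> ?T"
  proof (rule divide_le_posI_ennreal)
    show "0 < ennreal s" using s0 by simp
    show "ennreal (J\<^sup>2) \<le> ennreal s * ?T" using csG2 s0 unfolding J_def by simp
  qed
  finally show ?thesis .
qed


lemma Bfin:
  assumes fn: "(\<integral>\<^sup>+x. ennreal ((f x)\<^sup>2) \<partial>target K \<rho>) < \<infinity>"
  shows "(\<integral>\<^sup>+t. indicator {0..} t * (\<integral>\<^sup>+y. indicator (lvl K \<rho> t) y * ennreal ((f y)\<^sup>2) \<partial>lborel) \<partial>lborel) < \<infinity>"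
proof -
  have hm: "(\<lambda>(t::real, x). ennreal ((f x)\<^sup>2)) \<in> borel_measurable (borel \<Otimes>\<^sub>M borel)"
    using f by measurable
  have "(\<integral>\<^sup>+t. indicator {0..} t * (\<integral>\<^sup>+y. indicator (lvl K \<rho> t) y * ennreal ((f y)\<^sup>2) \<partial>lborel) \<partial>lborel)
      = (\<integral>\<^sup>+x. indicator K x * (\<integral>\<^sup>+t. indicator {0..\<rho> x} t * ennreal ((f x)\<^sup>2) \<partial>lborel) \<partial>lborel)"
    using tonelli[OF hm] by simp
  also have "\<dots> = (\<integral>\<^sup>+x. ennreal (normconst K \<rho>) * (ennreal (indicator K x * \<rho> x / normconst K \<rho>) * ennreal ((f x)\<^sup>2)) \<partial>lborel)"
  proof (rule nn_integral_cong)
    fix x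
    show "indicator K x * (\<integral>\<^sup>+t. indicator {0..\<rho> x} t * ennreal ((f x)\<^sup>2) \<partial>lborel) =
      ennreal (normconst K \<rho>) * (ennreal (indicator K x * \<rho> x / normconst K \<rho>) * ennreal ((f x)\<^sup>2))"
    proof (cases "x \<in> K")
      case True
      have c: "0 < normconst K \<rho>" by (rule c_facts(1))
      have r: "0 \<le> \<rho> x" using \<rho>_nonneg True by auto
      show ?thesis unfolding int_Icc_const[OF True] using True c r
        by (simp add: ennreal_mult[symmetric] mult.commute)
    qed simp
  qed
  also have "\<dots> = ennreal (normconst K \<rho>) * (\<integral>\<^sup>+x. ennreal (indicator K x * \<rho> x / normconst K \<rho>) * ennreal ((f x)\<^sup>2) \<partial>lborel)"
    by (rule nn_integral_cmult) (use f in simp)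
  also have "\<dots> = ennreal (normconst K \<rho>) * (\<integral>\<^sup>+x. ennreal ((f x)\<^sup>2) \<partial>target K \<rho>)"
    using target_nn[of "\<lambda>x. ennreal ((f x)\<^sup>2)"] f by simp
  also have "\<dots> < \<infinity>" using fn by (simp add: ennreal_mult_less_top)
  finally show ?thesis .
qed

lemma Q_props:
  assumes t: "0 < t"
    and bt: "(\<integral>\<^sup>+y. indicator (lvl K \<rho> t) y * ennreal ((f y)\<^sup>2) \<partial>lborel) \<noteq> \<infinity>"
  shows "(\<integral>\<^sup>+x. indicator (lvl K \<rho> t) x * ennreal ((kpow (H t) k f x - integral\<^sup>L (unif K \<rho> t) f)\<^sup>2) \<partial>lborel)
          / (\<integral>\<^sup>+y. indicator (lvl K \<rho> t) y * ennreal ((f y)\<^sup>2) \<partial>lborel)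
         \<le> (opnorm (unif K \<rho> t) (\<lambda>f y. kpow (H t) k f y - integral\<^sup>L (unif K \<rho> t) f))\<^sup>2"
    and "(\<integral>\<^sup>+x. indicator (lvl K \<rho> t) x * ennreal ((kpow (H t) k f x - integral\<^sup>L (unif K \<rho> t) f)\<^sup>2) \<partial>lborel)
         \<le> (\<integral>\<^sup>+x. indicator (lvl K \<rho> t) x * ennreal ((kpow (H t) k f x - integral\<^sup>L (unif K \<rho> t) f)\<^sup>2) \<partial>lborel)
          / (\<integral>\<^sup>+y. indicator (lvl K \<rho> t) y * ennreal ((f y)\<^sup>2) \<partial>lborel)
          * (\<integral>\<^sup>+y. indicator (lvl K \<rho> t) y * ennreal ((f y)\<^sup>2) \<partial>lborel)"
proof -
  define a where "a = (\<integral>\<^sup>+x. indicator (lvl K \<rho> t) x * ennreal ((kpow (H t) k f x - integral\<^sup>L (unif K \<rho> t) f)\<^sup>2) \<partial>lborel)"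
  define b where "b = (\<integral>\<^sup>+y. indicator (lvl K \<rho> t) y * ennreal ((f y)\<^sup>2) \<partial>lborel)"
  define N where "N = opnorm (unif K \<rho> t) (\<lambda>f y. kpow (H t) k f y - integral\<^sup>L (unif K \<rho> t) f)"
  have bfin: "b < \<infinity>" using bt unfolding b_def by (simp add: less_top)
  have p1: "a \<le> N\<^sup>2 * b" unfolding a_def b_def N_def by (rule per_t(1)[OF f t bfin[unfolded b_def]])
  have p2: "b = 0 \<Longrightarrow> a = 0" unfolding a_def b_def by (rule per_t(2)[OF f t bfin[unfolded b_def]])
  have "a / b \<le> N\<^sup>2 \<and> a \<le> a / b * b"
  proof (cases "b = 0")
    case True then show ?thesis using p2 by simp
  next
    case False
    have e: "a / b * b = a" using False bt unfolding b_def
      by (simp add: ennreal_divide_times ennreal_divide_self less_top)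
    have "a / b \<le> N\<^sup>2"
      by (rule divide_le_posI_ennreal) (use False p1 in \<open>simp_all add: zero_less_iff_neq_zero mult.commute\<close>)
    then show ?thesis using e by simp
  qed
  then show "a / b \<le> N\<^sup>2" and "a \<le> a / b * b" unfolding a_def b_def N_def by auto
qed


lemma main_bound:
  assumes fn: "(\<integral>\<^sup>+x. ennreal ((f x)\<^sup>2) \<partial>target K \<rho>) \<le> 1"
    and R: "\<And>x. x \<in> K \<Longrightarrow> ennsqrt (\<integral>\<^sup>+t. indicator {0..\<rho> x} t *
          (opnorm (unif K \<rho> t) (\<lambda>f y. kpow (H t) k f y - integral\<^sup>L (unif K \<rho> t) f))\<^sup>2
          / ennreal (\<rho> x) \<partial>lborel) \<le> R"
  shows "(\<integral>\<^sup>+x. ennreal ((hybk K \<rho> H k f x - simple_slice K \<rho> f x)\<^sup>2) \<partial>target K \<rho>) \<le> R\<^sup>2"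
proof -
  define c where "c = normconst K \<rho>"
  have c0: "0 < c" unfolding c_def by (rule c_facts(1))
  define D where "D x = hybk K \<rho> H k f x - simple_slice K \<rho> f x" for x
  define G where "G t x = kpow (H t) k f x - integral\<^sup>L (unif K \<rho> t) f" for t x
  define aa where "aa t = (\<integral>\<^sup>+x. indicator (lvl K \<rho> t) x * ennreal ((G t x)\<^sup>2) \<partial>lborel)" for t
  define bb where "bb t = (\<integral>\<^sup>+y. indicator (lvl K \<rho> t) y * ennreal ((f y)\<^sup>2) \<partial>lborel)" for t
  define N where "N t = opnorm (unif K \<rho> t) (\<lambda>f y. kpow (H t) k f y - integral\<^sup>L (unif K \<rho> t) f)" for t
  define Q where "Q t = aa t / bb t" for t
  define T where "T x = (\<integral>\<^sup>+t. indicator {0..\<rho> x} t * ennreal ((G t x)\<^sup>2) \<partial>lborel)" for x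
  have fnf: "(\<integral>\<^sup>+x. ennreal ((f x)\<^sup>2) \<partial>target K \<rho>) < \<infinity>" using fn by (simp add: le_less_trans)
  have Bf: "(\<integral>\<^sup>+t. indicator {0..} t * bb t \<partial>lborel) < \<infinity>" unfolding bb_def by (rule Bfin[OF fnf])
  have Dm: "D \<in> borel_measurable borel" unfolding D_def by (rule D_meas)
  have Gm: "(\<lambda>(t, x). G t x) \<in> borel_measurable (borel \<Otimes>\<^sub>M borel)" unfolding G_def by (rule G_meas)
  have aam: "aa \<in> borel_measurable borel" unfolding aa_def G_def by (rule aa_meas)
  have bbm: "bb \<in> borel_measurable borel" unfolding bb_def by (rule bb_meas)
  have Qm: "Q \<in> borel_measurable borel" unfolding Q_def using aam bbm by measurable
  have Tm: "T \<in> borel_measurable borel" unfolding T_def G_def by (rule T_meas)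
  have bbm': "(\<lambda>t. indicator {0..} t * bb t) \<in> borel_measurable lborel" using bbm by simp
  have AEt: "AE t in lborel. t \<noteq> 0 \<and> indicator {0..} t * bb t \<noteq> \<infinity>"
    using AE_lborel_singleton[of 0] nn_integral_PInf_AE[OF bbm' Bf[THEN less_imp_neq]] by eventually_elim auto
  have AEt2: "AE t in lborel. 0 < t \<longrightarrow> (Q t \<le> (N t)\<^sup>2 \<and> aa t \<le> Q t * bb t)"
    using AEt
  proof (rule AE_mp, intro AE_I2 impI)
    fix t :: real assume h: "t \<noteq> 0 \<and> indicator {0..} t * bb t \<noteq> \<infinity>" and t: "0 < t"
    then have bt: "bb t \<noteq> \<infinity>" by simp
    show "Q t \<le> (N t)\<^sup>2 \<and> aa t \<le> Q t * bb t"
      using Q_props[OF t bt[unfolded bb_def]] unfolding Q_def aa_def bb_def N_def G_def by simp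
  qed
  have "(\<integral>\<^sup>+x. ennreal ((D x)\<^sup>2) \<partial>target K \<rho>) = (\<integral>\<^sup>+x. ennreal (indicator K x * \<rho> x / c) * ennreal ((D x)\<^sup>2) \<partial>lborel)"
    unfolding c_def by (rule target_nn) (use Dm in simp)
  also have "\<dots> = (\<integral>\<^sup>+x. ennreal (1 / c) * ennreal (indicator K x * (\<rho> x * (D x)\<^sup>2)) \<partial>lborel)"
    unfolding c_def by (intro nn_integral_cong w_split) simp
  also have "\<dots> = ennreal (1 / c) * (\<integral>\<^sup>+x. ennreal (indicator K x * (\<rho> x * (D x)\<^sup>2)) \<partial>lborel)"
    by (rule nn_integral_cmult) (use Dm in simp)
  also have "\<dots> \<le> ennreal (1 / c) * (\<integral>\<^sup>+x. indicator K x * T x \<partial>lborel)"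
  proof (rule mult_left_mono[OF nn_integral_mono_AE])
    show "AE x in lborel. ennreal (indicator K x * (\<rho> x * (D x)\<^sup>2)) \<le> indicator K x * T x"
      using E_null
    proof (rule AE_mp, intro AE_I2 impI)
      fix x assume E: "x \<in> K \<and> 0 < \<rho> x \<longrightarrow> emeasure lborel (lvl K \<rho> (\<rho> x)) \<noteq> 0"
      show "ennreal (indicator K x * (\<rho> x * (D x)\<^sup>2)) \<le> indicator K x * T x"
      proof (cases "x \<in> K")
        case False then show ?thesis by simp
      next
        case xK: True
        show ?thesis
        proof (cases "\<rho> x = 0")
          case True then show ?thesis by simp
        next
          case False
          with xK \<rho>_nonneg have x0: "0 < \<rho> x" by force
          have "ennreal (\<rho> x * (D x)\<^sup>2) \<le> T x"
            unfolding D_def T_def G_def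
            by (rule pointwise[OF xK x0 _ Bf[unfolded bb_def]]) (use E xK x0 in simp)
          then show ?thesis using xK by simp
        qed
      qed
    qed
  qed simp
  also have "(\<integral>\<^sup>+x. indicator K x * T x \<partial>lborel) = (\<integral>\<^sup>+t. indicator {0..} t * aa t \<partial>lborel)"
  proof -
    have hm: "(\<lambda>(t, x). ennreal ((G t x)\<^sup>2)) \<in> borel_measurable (borel \<Otimes>\<^sub>M borel)"
      using Gm by measurable
    show ?thesis unfolding T_def aa_def using tonelli[OF hm] by simp
  qed
  also have "(\<integral>\<^sup>+t. indicator {0..} t * aa t \<partial>lborel) \<le> (\<integral>\<^sup>+t. indicator {0..} t * (Q t * bb t) \<partial>lborel)"
  proof (rule nn_integral_mono_AE)
    show "AE t in lborel. indicator {0..} t * aa t \<le> indicator {0..} t * (Q t * bb t)"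
      using AEt AEt2
    proof (eventually_elim)
      case (elim t)
      show ?case
      proof (cases "0 < t")
        case True then show ?thesis using elim by (simp add: mult_left_mono)
      next
        case False then have "t \<notin> {0..}" using elim by auto
        then show ?thesis by simp
      qed
    qed
  qed
  also have "(\<integral>\<^sup>+t. indicator {0..} t * (Q t * bb t) \<partial>lborel)
     = (\<integral>\<^sup>+x. indicator K x * (\<integral>\<^sup>+t. indicator {0..\<rho> x} t * (Q t * ennreal ((f x)\<^sup>2)) \<partial>lborel) \<partial>lborel)"
  proof -
    have hm: "(\<lambda>(t, x). Q t * ennreal ((f x)\<^sup>2)) \<in> borel_measurable (borel \<Otimes>\<^sub>M borel)"
      using Qm f by measurable
    have inner: "(\<integral>\<^sup>+x. indicator (lvl K \<rho> t) x * (Q t * ennreal ((f x)\<^sup>2)) \<partial>lborel) = Q t * bb t" for t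
    proof -
      have "(\<integral>\<^sup>+x. indicator (lvl K \<rho> t) x * (Q t * ennreal ((f x)\<^sup>2)) \<partial>lborel)
          = (\<integral>\<^sup>+x. Q t * (indicator (lvl K \<rho> t) x * ennreal ((f x)\<^sup>2)) \<partial>lborel)"
        by (simp add: mult.left_commute)
      also have "\<dots> = Q t * bb t" unfolding bb_def by (rule nn_integral_cmult) (use f in simp)
      finally show ?thesis .
    qed
    show ?thesis using tonelli[OF hm] unfolding inner by simp
  qed
  also have "\<dots> = (\<integral>\<^sup>+x. indicator K x * (ennreal ((f x)\<^sup>2) * (\<integral>\<^sup>+t. indicator {0..\<rho> x} t * Q t \<partial>lborel)) \<partial>lborel)"
  proof (rule nn_integral_cong)
    fix x
    have "(\<integral>\<^sup>+t. indicator {0..\<rho> x} t * (Q t * ennreal ((f x)\<^sup>2)) \<partial>lborel)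
        = (\<integral>\<^sup>+t. ennreal ((f x)\<^sup>2) * (indicator {0..\<rho> x} t * Q t) \<partial>lborel)"
      by (simp add: ac_simps)
    also have "\<dots> = ennreal ((f x)\<^sup>2) * (\<integral>\<^sup>+t. indicator {0..\<rho> x} t * Q t \<partial>lborel)"
      by (rule nn_integral_cmult) (use Qm in simp)
    finally show "indicator K x * (\<integral>\<^sup>+t. indicator {0..\<rho> x} t * (Q t * ennreal ((f x)\<^sup>2)) \<partial>lborel)
      = indicator K x * (ennreal ((f x)\<^sup>2) * (\<integral>\<^sup>+t. indicator {0..\<rho> x} t * Q t \<partial>lborel))" by simp
  qed
  also have "\<dots> \<le> (\<integral>\<^sup>+x. indicator K x * (ennreal ((f x)\<^sup>2) * (ennreal (\<rho> x) * R\<^sup>2)) \<partial>lborel)"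
  proof (rule nn_integral_mono)
    fix x
    show "indicator K x * (ennreal ((f x)\<^sup>2) * (\<integral>\<^sup>+t. indicator {0..\<rho> x} t * Q t \<partial>lborel))
       \<le> indicator K x * (ennreal ((f x)\<^sup>2) * (ennreal (\<rho> x) * R\<^sup>2))"
    proof (cases "x \<in> K")
      case False then show ?thesis by simp
    next
      case xK: True
      have key: "(\<integral>\<^sup>+t. indicator {0..\<rho> x} t * Q t \<partial>lborel) \<le> ennreal (\<rho> x) * R\<^sup>2"
      proof (cases "\<rho> x = 0")
        case True
        have "AE t in lborel. indicator {0..\<rho> x} t * Q t = 0"
          using AE_lborel_singleton[of 0] by (rule AE_mp) (intro AE_I2, simp add: True)
        from nn_integral_cong_AE[OF this] have "(\<integral>\<^sup>+t. indicator {0..\<rho> x} t * Q t \<partial>lborel) = 0"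
          by simp
        then show ?thesis by simp
      next
        case False
        with xK \<rho>_nonneg have x0: "0 < \<rho> x" by force
        define r where "r = ennreal (\<rho> x)"
        have r0: "r \<noteq> 0" "r \<noteq> \<top>" unfolding r_def using x0 by auto
        have split: "indicator {0..\<rho> x} t * Q t = r * (indicator {0..\<rho> x} t * Q t / r)" for t
          using r0 by (simp add: ennreal_times_divide mult.commute[of r] mult_divide_eq_ennreal)
        have "(\<integral>\<^sup>+t. indicator {0..\<rho> x} t * Q t \<partial>lborel) = (\<integral>\<^sup>+t. r * (indicator {0..\<rho> x} t * Q t / r) \<partial>lborel)"
          by (simp only: split[symmetric])
        also have "\<dots> = r * (\<integral>\<^sup>+t. indicator {0..\<rho> x} t * Q t / r \<partial>lborel)"
          by (rule nn_integral_cmult) (use Qm in simp)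
        also have "\<dots> \<le> r * (\<integral>\<^sup>+t. indicator {0..\<rho> x} t * (N t)\<^sup>2 / r \<partial>lborel)"
        proof (rule mult_left_mono[OF nn_integral_mono_AE])
          show "AE t in lborel. indicator {0..\<rho> x} t * Q t / r \<le> indicator {0..\<rho> x} t * (N t)\<^sup>2 / r"
            using AEt AEt2
          proof (eventually_elim)
            case (elim t)
            show ?case
            proof (cases "t \<in> {0..\<rho> x}")
              case True
              with elim have "0 < t" by auto
              with elim have "Q t \<le> (N t)\<^sup>2" by simp
              then show ?thesis by (intro divide_right_mono_ennreal mult_left_mono) simp_all
            qed simp
          qed
        qed simp
        also have "\<dots> \<le> r * R\<^sup>2"
        proof (rule mult_left_mono)
          have "ennsqrt (\<integral>\<^sup>+t. indicator {0..\<rho> x} t * (N t)\<^sup>2 / r \<partial>lborel) \<le> R"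
            using R[OF xK] unfolding N_def r_def .
          then show "(\<integral>\<^sup>+t. indicator {0..\<rho> x} t * (N t)\<^sup>2 / r \<partial>lborel) \<le> R\<^sup>2"
            by (simp add: ennsqrt_le_iff)
        qed simp
        finally show ?thesis unfolding r_def .
      qed
      show ?thesis using key by (simp add: mult_left_mono)
    qed
  qed
  finally have chain: "(\<integral>\<^sup>+x. ennreal ((D x)\<^sup>2) \<partial>target K \<rho>)
      \<le> ennreal (1 / c) * (\<integral>\<^sup>+x. indicator K x * (ennreal ((f x)\<^sup>2) * (ennreal (\<rho> x) * R\<^sup>2)) \<partial>lborel)"
    by (simp add: mult_left_mono)
  also have "ennreal (1 / c) * (\<integral>\<^sup>+x. indicator K x * (ennreal ((f x)\<^sup>2) * (ennreal (\<rho> x) * R\<^sup>2)) \<partial>lborel)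
      = R\<^sup>2 * (\<integral>\<^sup>+x. ennreal ((f x)\<^sup>2) \<partial>target K \<rho>)"
  proof -
    have pw: "ennreal (1 / c) * (indicator K x * (ennreal ((f x)\<^sup>2) * (ennreal (\<rho> x) * R\<^sup>2)))
        = R\<^sup>2 * (ennreal (indicator K x * \<rho> x / c) * ennreal ((f x)\<^sup>2))" for x
    proof (cases "x \<in> K")
      case True
      have r: "0 \<le> \<rho> x" using \<rho>_nonneg True by auto
      have "ennreal (indicator K x * \<rho> x / c) = ennreal (1/c) * ennreal (\<rho> x)"
        using True r c0 by (simp add: ennreal_mult[symmetric])
      then show ?thesis using True by (simp add: ac_simps)
    qed simp
    have "ennreal (1 / c) * (\<integral>\<^sup>+x. indicator K x * (ennreal ((f x)\<^sup>2) * (ennreal (\<rho> x) * R\<^sup>2)) \<partial>lborel)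
        = (\<integral>\<^sup>+x. ennreal (1 / c) * (indicator K x * (ennreal ((f x)\<^sup>2) * (ennreal (\<rho> x) * R\<^sup>2))) \<partial>lborel)"
      by (rule nn_integral_cmult[symmetric]) (use f in simp)
    also have "\<dots> = (\<integral>\<^sup>+x. R\<^sup>2 * (ennreal (indicator K x * \<rho> x / c) * ennreal ((f x)\<^sup>2)) \<partial>lborel)"
      by (simp only: pw)
    also have "\<dots> = R\<^sup>2 * (\<integral>\<^sup>+x. ennreal (indicator K x * \<rho> x / c) * ennreal ((f x)\<^sup>2) \<partial>lborel)"
      by (rule nn_integral_cmult) (use f in simp)
    also have "\<dots> = R\<^sup>2 * (\<integral>\<^sup>+x. ennreal ((f x)\<^sup>2) \<partial>target K \<rho>)"
      unfolding c_def using target_nn[of "\<lambda>x. ennreal ((f x)\<^sup>2)"] f by simp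
    finally show ?thesis .
  qed
  also have "\<dots> \<le> R\<^sup>2 * 1" by (rule mult_left_mono[OF fn]) simp
  finally show ?thesis unfolding D_def by simp
qed

end

lemma bound:
  fixes f :: "'a \<Rightarrow> real"
  assumes fm: "f \<in> borel_measurable (target K \<rho>)" and fl: "l2norm (target K \<rho>) f \<le> 1"
  shows "l2norm (target K \<rho>) (\<lambda>x. hybk K \<rho> H k f x - simple_slice K \<rho> f x)
    \<le> (SUP x\<in>K. ennsqrt (\<integral>\<^sup>+t. indicator {0..\<rho> x} t *
          (opnorm (unif K \<rho> t) (\<lambda>f y. kpow (H t) k f y - integral\<^sup>L (unif K \<rho> t) f))\<^sup>2
          / ennreal (\<rho> x) \<partial>lborel))" (is "_ \<le> ?R")
proof -
  have st: "sets (target K \<rho>) = sets borel" unfolding target_def by simp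
  have f: "f \<in> borel_measurable borel" using fm by (simp only: measurable_cong_sets[OF st refl])
  have fn: "(\<integral>\<^sup>+x. ennreal ((f x)\<^sup>2) \<partial>target K \<rho>) \<le> 1"
    using fl unfolding l2norm_def ennsqrt_le_iff by simp
  have R: "\<And>x. x \<in> K \<Longrightarrow> ennsqrt (\<integral>\<^sup>+t. indicator {0..\<rho> x} t *
          (opnorm (unif K \<rho> t) (\<lambda>f y. kpow (H t) k f y - integral\<^sup>L (unif K \<rho> t) f))\<^sup>2
          / ennreal (\<rho> x) \<partial>lborel) \<le> ?R"
    by (rule SUP_upper)
  have "(\<integral>\<^sup>+x. ennreal ((hybk K \<rho> H k f x - simple_slice K \<rho> f x)\<^sup>2) \<partial>target K \<rho>) \<le> ?R\<^sup>2"
    by (rule main_bound[OF f fn R])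
  then show ?thesis unfolding l2norm_def ennsqrt_le_iff by simp
qed

lemma final:
  "opnorm (target K \<rho>) (\<lambda>f x. hybk K \<rho> H k f x - simple_slice K \<rho> f x)
    \<le> (SUP x\<in>K. ennsqrt (\<integral>\<^sup>+t. indicator {0..\<rho> x} t *
          (opnorm (unif K \<rho> t) (\<lambda>f y. kpow (H t) k f y - integral\<^sup>L (unif K \<rho> t) f))\<^sup>2
          / ennreal (\<rho> x) \<partial>lborel))"
  unfolding opnorm_def[of "target K \<rho>"]
  apply (rule SUP_least)
  apply (erule CollectE)
  apply (erule conjE)
  apply (erule (1) bound)
  done

end

theorem lemma3p1:
  fixes K :: "'a::euclidean_space set" and \<rho> :: "'a \<Rightarrow> real"
    and H :: "real \<Rightarrow> 'a \<Rightarrow> 'a measure" and k :: nat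
  assumes K_borel: "K \<in> sets borel"
    and \<rho>_meas: "\<rho> \<in> borel_measurable borel"
    and \<rho>_nonneg: "\<forall>x\<in>K. 0 \<le> \<rho> x"
    and Z_pos: "0 < (\<integral>\<^sup>+x. ennreal (indicator K x * \<rho> x) \<partial>lborel)"
    and Z_fin: "(\<integral>\<^sup>+x. ennreal (indicator K x * \<rho> x) \<partial>lborel) < \<infinity>"
    and vol_lvl: "\<forall>t. 0 < t \<and> ereal t < esssup lborel (\<lambda>x. ereal (indicator K x * \<rho> x)) \<longrightarrow>
        0 < emeasure lborel (lvl K \<rho> t) \<and> emeasure lborel (lvl K \<rho> t) < \<infinity>"
    and H_meas: "(\<lambda>(t, x). H t x) \<in> borel \<Otimes>\<^sub>M borel \<rightarrow>\<^sub>M subprob_algebra borel"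
    and H_markov: "\<forall>t\<ge>0. \<forall>x\<in>lvl K \<rho> t. prob_space (H t x) \<and> emeasure (H t x) (lvl K \<rho> t) = 1"
    and H_zero: "\<forall>t\<ge>0. \<forall>x. x \<notin> lvl K \<rho> t \<longrightarrow> emeasure (H t x) (space (H t x)) = 0"
    and H_rev: "\<forall>t\<ge>0. \<forall>A\<in>sets borel. \<forall>B\<in>sets borel.
        (\<integral>\<^sup>+x. emeasure (H t x) B * indicator A x \<partial>unif K \<rho> t)
      = (\<integral>\<^sup>+x. emeasure (H t x) A * indicator B x \<partial>unif K \<rho> t)"
  shows "opnorm (target K \<rho>) (\<lambda>f x. hybk K \<rho> H k f x - simple_slice K \<rho> f x)
    \<le> (SUP x\<in>K. ennsqrt (\<integral>\<^sup>+t. indicator {0..\<rho> x} t *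
          (opnorm (unif K \<rho> t) (\<lambda>f y. kpow (H t) k f y - integral\<^sup>L (unif K \<rho> t) f))\<^sup>2
          / ennreal (\<rho> x) \<partial>lborel))"
proof -
  interpret sl K \<rho> H
    using assms by (unfold_locales) auto
  show ?thesis by (rule final)
qed

end
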